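(* Let $K:[0,1]^2\to\mathbb R$ be nonnegative, measurable, symmetric ($K(x,y)=K(y,x)$) with $\sup_{x\in[0,1]}\int_0^1K(x,y)\,dy<+\infty$. Take the weight matrix $\mathbf K=P_nK$. Assume that $\rho_n\to0$ and $n\rho_n=\omega((\log n)^\gamma)$ for some $\gamma>1$. Let $w_{ij}=\min(\mathbf K_{ij},\rho_n^{-1})$ and let $\mathbf\Lambda$ be a random $n\times n$ matrix whose entries $\mathbf\Lambda_{ij}$ ($i\neq j$) are such that $\rho_n\mathbf\Lambda_{ij}$ is Bernoulli with parameter $\rho_n w_{ij}$, and for each row $i$ the variables $(\mathbf\Lambda_{ij})_{j\in[n]}$ are independent. Then with probability $1$, \[\|I_n\mathbf\Lambda\|_{L^{\infty,1}([0,1]^2)}-\|I_nw\|_{L^{\infty,1}([0,1]^2)}\to0 .\] If moreover $\|I_n\mathbf K(x,\cdot)-K(x,\cdot)\|_{L^1([0,1])}\to0$ uniformly in $x\in[0,1]$, then with probability $1$, $\|I_n\mathbf\Lambda\|_{L^{\infty,1}([0,1]^2)}\to\|K\|_{L^{\infty,1}([0,1]^2)}$.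
   Context: For $n\in\mathbb N^*$, use the equispaced partition of $[0,1]$ into intervals $]x_{i-1},x_i]$, $x_i=i/n$. $(P_nK)_{ij}=n^2\int_{]x_{i-1},x_i]\times]x_{j-1},x_j]}K$, and for a matrix $\mathbf M$, $I_n\mathbf M(x,y)=\sum_{i,j}\mathbf M_{ij}\chi_{]x_{i-1},x_i]}(x)\chi_{]x_{j-1},x_j]}(y)$. For $F$ on $[0,1]^2$, $\|F\|_{L^{\infty,1}([0,1]^2)}=\sup_x\int_0^1|F(x,y)|dy$. *)

theory Defs
  imports "HOL-Probability.Probability" "HOL-Library.Landau_Symbols"
begin

definition cell :: "nat \<Rightarrow> nat \<Rightarrow> real set" where
  "cell n i = {real i / real n <.. real (Suc i) / real n}"

definition Pn :: "nat \<Rightarrow> (real \<Rightarrow> real \<Rightarrow> real) \<Rightarrow> nat \<Rightarrow> nat \<Rightarrow> real" where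
  "Pn n K i j = (real n)\<^sup>2 *
     (LINT z : cell n i \<times> cell n j | (lborel :: (real \<times> real) measure). K (fst z) (snd z))"

definition In :: "nat \<Rightarrow> (nat \<Rightarrow> nat \<Rightarrow> real) \<Rightarrow> real \<Rightarrow> real \<Rightarrow> real" where
  "In n M x y = (\<Sum>i<n. \<Sum>j<n. M i j * indicator (cell n i) x * indicator (cell n j) y)"

definition Linf1 :: "(real \<Rightarrow> real \<Rightarrow> real) \<Rightarrow> real" where
  "Linf1 F = enn2real (SUP x\<in>{0..1}. \<integral>\<^sup>+ y\<in>{0..1}. ennreal \<bar>F x y\<bar> \<partial>lborel)"

end

theory Submission
  imports Defs
begin


lemma exp_quad_bound:
  fixes l :: real assumes "\<bar>l\<bar> \<le> 1" shows "exp l \<le> 1 + l + l\<^sup>2"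
proof (cases "l \<ge> 0")
  case True thus ?thesis using exp_bound[of l] assms by auto
next
  case False
  define y where "y = - l"
  have y: "0 < y" "y \<le> 1" using False assms y_def by auto
  have "exp y \<ge> 1 + y" by simp
  have "exp l = 1 / exp y" by (simp add: y_def exp_minus field_simps)
  also have "\<dots> \<le> 1 / (1 + y)" using y by (intro divide_left_mono) auto
  also have "\<dots> \<le> 1 - y + y\<^sup>2"
  proof -
    have "1 \<le> (1 + y) * (1 - y + y\<^sup>2)" using y by (simp add: algebra_simps power2_eq_square power3_eq_cube)
    thus ?thesis using y by (simp add: field_simps)
  qed
  finally show ?thesis by (simp add: y_def)
qed

context prob_space
begin

lemma mgf_bound:
  fixes X :: "nat \<Rightarrow> 'a \<Rightarrow> real" and J :: "nat set" and p :: "nat \<Rightarrow> real" and l :: real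
  assumes J: "finite J" and ind: "indep_vars (\<lambda>_. borel) X J"
    and rv: "\<And>j. j \<in> J \<Longrightarrow> X j \<in> borel_measurable M"
    and vals: "\<And>j. j \<in> J \<Longrightarrow> AE \<omega> in M. X j \<omega> \<in> {0,1}"
    and pr: "\<And>j. j \<in> J \<Longrightarrow> prob {\<omega>\<in>space M. X j \<omega> = 1} = p j"
  shows "integrable M (\<lambda>\<omega>. exp (l * (\<Sum>j\<in>J. X j \<omega>)))"
    and "expectation (\<lambda>\<omega>. exp (l * (\<Sum>j\<in>J. X j \<omega>))) \<le> exp ((\<Sum>j\<in>J. p j) * (exp l - 1))"
proof -
  define Y where "Y = (\<lambda>j \<omega>. exp (l * X j \<omega>))"
  have eq: "exp (l * (\<Sum>j\<in>J. X j \<omega>)) = (\<Prod>j\<in>J. Y j \<omega>)" for \<omega>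
    by (simp add: Y_def sum_distrib_left exp_sum J)
  have indY: "indep_vars (\<lambda>_. borel) Y J"
    unfolding Y_def by (rule indep_vars_compose2[OF ind]) auto
  have intY: "integrable M (Y j)" if "j \<in> J" for j
  proof (rule integrable_const_bound[where B="exp \<bar>l\<bar>"])
    show "AE x in M. norm (Y j x) \<le> exp \<bar>l\<bar>"
      using vals[OF that] by eventually_elim (auto simp: Y_def)
    show "Y j \<in> borel_measurable M" using rv[OF that] unfolding Y_def by measurable
  qed
  have EY: "expectation (Y j) = 1 + (exp l - 1) * p j" if "j \<in> J" for j
  proof -
    have meas: "{\<omega>\<in>space M. X j \<omega> = 1} \<in> events" using rv[OF that] by measurable
    have "expectation (Y j) = expectation (\<lambda>\<omega>. 1 + (exp l - 1) * indicator {\<omega>\<in>space M. X j \<omega> = 1} \<omega>)"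
    proof (rule integral_cong_AE)
      show "Y j \<in> borel_measurable M" using rv[OF that] unfolding Y_def by measurable
      show "(\<lambda>\<omega>. 1 + (exp l - 1) * indicator {\<omega>\<in>space M. X j \<omega> = 1} \<omega>) \<in> borel_measurable M"
        using meas by measurable
      show "AE \<omega> in M. Y j \<omega> = 1 + (exp l - 1) * indicator {\<omega>\<in>space M. X j \<omega> = 1} \<omega>"
        using vals[OF that] AE_space by eventually_elim (auto simp: Y_def indicator_def)
    qed
    also have "\<dots> = 1 + (exp l - 1) * p j"
      using meas pr[OF that] by (subst Bochner_Integration.integral_add) (auto simp: prob_space intro!: integrable_real_indicator emeasure_finite[THEN less_top[THEN iffD1]])
    finally show ?thesis .
  qed
  show "integrable M (\<lambda>\<omega>. exp (l * (\<Sum>j\<in>J. X j \<omega>)))"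
    unfolding eq using indep_vars_integrable[OF J indY intY] by simp
  have "expectation (\<lambda>\<omega>. exp (l * (\<Sum>j\<in>J. X j \<omega>))) = (\<Prod>j\<in>J. expectation (Y j))"
    unfolding eq by (rule indep_vars_lebesgue_integral[OF J indY intY])
  also have "\<dots> \<le> (\<Prod>j\<in>J. exp (p j * (exp l - 1)))"
  proof (rule prod_mono, safe)
    fix j assume j: "j \<in> J"
    have p01: "0 \<le> p j" "p j \<le> 1" using pr[OF j] measure_nonneg prob_le_1 by metis+
    have "0 \<le> 1 - p j" using p01 by simp
    also have "\<dots> \<le> 1 + (exp l - 1) * p j" using p01 by (simp add: algebra_simps) 
    finally show "0 \<le> expectation (Y j)" using EY[OF j] by simp
    show "expectation (Y j) \<le> exp (p j * (exp l - 1))"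
      using EY[OF j] exp_ge_add_one_self[of "p j * (exp l - 1)"] by (simp add: mult.commute)
  qed
  also have "\<dots> = exp ((\<Sum>j\<in>J. p j) * (exp l - 1))"
    by (simp add: exp_sum J sum_distrib_right)
  finally show "expectation (\<lambda>\<omega>. exp (l * (\<Sum>j\<in>J. X j \<omega>))) \<le> exp ((\<Sum>j\<in>J. p j) * (exp l - 1))" .
qed

lemma tail_bound:
  fixes X :: "nat \<Rightarrow> 'a \<Rightarrow> real" and J :: "nat set" and p :: "nat \<Rightarrow> real" and l a :: real
  assumes J: "finite J" and ind: "indep_vars (\<lambda>_. borel) X J"
    and rv: "\<And>j. j \<in> J \<Longrightarrow> X j \<in> borel_measurable M"
    and vals: "\<And>j. j \<in> J \<Longrightarrow> AE \<omega> in M. X j \<omega> \<in> {0,1}"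
    and pr: "\<And>j. j \<in> J \<Longrightarrow> prob {\<omega>\<in>space M. X j \<omega> = 1} = p j"
    and l: "\<bar>l\<bar> \<le> 1"
  shows "prob {\<omega>\<in>space M. a \<le> l * ((\<Sum>j\<in>J. X j \<omega>) - (\<Sum>j\<in>J. p j))}
           \<le> exp ((\<Sum>j\<in>J. p j) * l\<^sup>2 - a)"
proof -
  define \<mu> where "\<mu> = (\<Sum>j\<in>J. p j)"
  have mu: "0 \<le> \<mu>" unfolding \<mu>_def using pr by (intro sum_nonneg) (metis measure_nonneg)
  have rvS: "(\<lambda>\<omega>. \<Sum>j\<in>J. X j \<omega>) \<in> borel_measurable M" using rv by measurable
  have "{\<omega>\<in>space M. a \<le> l * ((\<Sum>j\<in>J. X j \<omega>) - \<mu>)}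
        = {\<omega>\<in>space M. exp (a + l * \<mu>) \<le> exp (l * (\<Sum>j\<in>J. X j \<omega>))}"
    by (auto simp: algebra_simps)
  also have "prob \<dots> \<le> expectation (\<lambda>\<omega>. exp (l * (\<Sum>j\<in>J. X j \<omega>))) / exp (a + l * \<mu>)"
    by (rule integral_Markov_inequality_measure[where A="space M"])
       (use mgf_bound(1)[OF assms(1-5)] in auto)
  also have "\<dots> \<le> exp (\<mu> * (exp l - 1)) / exp (a + l * \<mu>)"
    using mgf_bound(2)[OF assms(1-5)] unfolding \<mu>_def by (intro divide_right_mono) auto
  also have "\<dots> = exp (\<mu> * (exp l - 1 - l) - a)"
    by (simp add: exp_diff[symmetric] algebra_simps)
  also have "\<dots> \<le> exp (\<mu> * l\<^sup>2 - a)"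
    using exp_quad_bound[OF l] mu by (simp add: mult_left_mono)
  finally show ?thesis unfolding \<mu>_def .
qed

end


lemma cell_sub: "i < n \<Longrightarrow> cell n i \<subseteq> {0..1}"
proof
  fix x assume i: "i < n" and x: "x \<in> cell n i"
  have "0 \<le> real i / real n" by simp
  moreover have "real (Suc i) / real n \<le> 1" using i by simp
  moreover have "real i / real n < x" "x \<le> real (Suc i) / real n" using x unfolding cell_def by auto
  ultimately show "x \<in> {0..1}" unfolding atLeastAtMost_iff by linarith
qed

lemma cell_disj: "x \<in> cell n i \<Longrightarrow> x \<in> cell n j \<Longrightarrow> i = j"
proof (rule ccontr)
  assume a: "x \<in> cell n i" "x \<in> cell n j" "i \<noteq> j"
  then have n: "n > 0" by (cases n) (auto simp: cell_def)
  { fix a b :: nat assume "a < b" "x \<in> cell n a" "x \<in> cell n b"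
    then have "real (Suc a) \<le> real b" by simp
    then have "real (Suc a) / n \<le> real b / n" using n by (simp add: divide_right_mono)
    with \<open>x \<in> cell n a\<close> \<open>x \<in> cell n b\<close> have False by (auto simp: cell_def) }
  with a show False by (metis nat_neq_iff)
qed

lemma cell_mem: "i < n \<Longrightarrow> real (Suc i) / real n \<in> cell n i"
  by (auto simp: cell_def divide_strict_right_mono)

lemma cell_borel[measurable]: "cell n i \<in> sets borel"
  by (simp add: cell_def)

lemma emeasure_cell: "0 < n \<Longrightarrow> emeasure lborel (cell n i) = ennreal (1 / real n)"
proof -
  assume n: "0 < n"
  have le: "real i / real n \<le> real (Suc i) / real n" by (intro divide_right_mono) auto
  have "real (Suc i) / real n - real i / real n = 1 / real n"
    by (simp only: diff_divide_distrib[symmetric]) simp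
  then show ?thesis unfolding cell_def using emeasure_lborel_Ioc[OF le] by simp
qed

lemma sum_ind1: "j0 < n \<Longrightarrow> y \<in> cell n j0 \<Longrightarrow> (\<Sum>j<n. f j * indicator (cell n j) y) = (f j0 :: 'b::semiring_1)"
proof -
  assume a: "j0 < n" "y \<in> cell n j0"
  have "(\<Sum>j<n. f j * indicator (cell n j) y) = f j0 * indicator (cell n j0) y + (\<Sum>j\<in>{..<n}-{j0}. f j * indicator (cell n j) y)"
    by (rule sum.remove) (use a in auto)
  moreover have "(\<Sum>j\<in>{..<n}-{j0}. f j * indicator (cell n j) y) = 0"
  proof (rule sum.neutral, intro ballI)
    fix j assume "j \<in> {..<n} - {j0}"
    then have "y \<notin> cell n j" using a(2) cell_disj[of y n j j0] by auto
    then show "f j * indicator (cell n j) y = 0" by simp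
  qed
  ultimately show ?thesis using a by simp
qed

lemma sum_ind0: "\<not> (\<exists>j<n. y \<in> cell n j) \<Longrightarrow> (\<Sum>j<n. f j * indicator (cell n j) y) = (0 :: 'b::semiring_1)"
  by (auto intro!: sum.neutral)

lemma In_eval: "i < n \<Longrightarrow> j < n \<Longrightarrow> x \<in> cell n i \<Longrightarrow> y \<in> cell n j \<Longrightarrow> In n M x y = M i j"
proof -
  assume a: "i < n" "j < n" "x \<in> cell n i" "y \<in> cell n j"
  have "In n M x y = (\<Sum>i'<n. (\<Sum>j'<n. M i' j' * indicator (cell n j') y) * indicator (cell n i') x)"
    unfolding In_def sum_distrib_right by (intro sum.cong refl) (simp add: mult_ac)
  also have "\<dots> = (\<Sum>i'<n. M i' j * indicator (cell n i') x)"
    by (rule sum.cong[OF refl], subst sum_ind1[OF a(2,4)], rule refl)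
  also have "\<dots> = M i j" by (rule sum_ind1[OF a(1,3)])
  finally show ?thesis .
qed

lemma In_zero: "\<not> (\<exists>i<n. x \<in> cell n i) \<or> \<not> (\<exists>j<n. y \<in> cell n j) \<Longrightarrow> In n M x y = 0"
  unfolding In_def by (auto intro!: sum.neutral)

lemma In_cases: "In n M x y = 0 \<or> (\<exists>i<n. \<exists>j<n. x \<in> cell n i \<and> y \<in> cell n j \<and> In n M x y = M i j)"
  using In_eval In_zero by metis

lemma In_row_int:
  assumes i: "i < n" and x: "x \<in> cell n i"
  shows "(\<integral>\<^sup>+ y\<in>{0..1}. ennreal \<bar>In n M x y\<bar> \<partial>lborel) = ennreal ((\<Sum>j<n. \<bar>M i j\<bar>) / real n)"
proof -
  have n: "0 < n" using i by simp
  have pw: "ennreal \<bar>In n M x y\<bar> * indicator {0..1} y = (\<Sum>j<n. ennreal \<bar>M i j\<bar> * indicator (cell n j) y)" for y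
  proof (cases "\<exists>j<n. y \<in> cell n j")
    case True
    then obtain j where j: "j < n" "y \<in> cell n j" by auto
    then have "y \<in> {0..1}" using cell_sub by blast
    then show ?thesis using j In_eval[OF i j(1) x j(2)] by (simp add: sum_ind1[OF j])
  next
    case False
    then show ?thesis using In_zero[of n x y M] by (simp add: sum_ind0[OF False])
  qed
  have "(\<integral>\<^sup>+ y\<in>{0..1}. ennreal \<bar>In n M x y\<bar> \<partial>lborel) = (\<integral>\<^sup>+ y. (\<Sum>j<n. ennreal \<bar>M i j\<bar> * indicator (cell n j) y) \<partial>lborel)"
    by (simp add: pw)
  also have "\<dots> = (\<Sum>j<n. ennreal \<bar>M i j\<bar> * emeasure lborel (cell n j))"
    by (subst nn_integral_sum) (auto simp: nn_integral_cmult_indicator)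
  also have "\<dots> = (\<Sum>j<n. ennreal (\<bar>M i j\<bar> / real n))"
    using n by (simp add: emeasure_cell ennreal_mult[symmetric])
  also have "\<dots> = ennreal ((\<Sum>j<n. \<bar>M i j\<bar>) / real n)"
    by (simp add: sum_divide_distrib)
  finally show ?thesis .
qed

lemma In_row_int0:
  assumes "\<not> (\<exists>i<n. x \<in> cell n i)"
  shows "(\<integral>\<^sup>+ y\<in>{0..1}. ennreal \<bar>In n M x y\<bar> \<partial>lborel) = 0"
  using In_zero[of n x _ M] assms by simp

lemma Linf1_In:
  assumes n: "0 < n"
  shows "Linf1 (In n M) = Max ((\<lambda>i. (\<Sum>j<n. \<bar>M i j\<bar>) / real n) ` {..<n})"
proof -
  define R where "R = (\<lambda>i. (\<Sum>j<n. \<bar>M i j\<bar>) / real n)"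
  have fin: "finite (R ` {..<n})" "R ` {..<n} \<noteq> {}" using n by auto
  have R0: "0 \<le> R i" for i unfolding R_def by (auto intro: sum_nonneg)
  have "R 0 \<le> Max (R ` {..<n})" using fin(1) n by (intro Max_ge) auto
  then have Mx0: "0 \<le> Max (R ` {..<n})" using R0[of 0] by linarith
  have "(SUP x\<in>{0..1}. \<integral>\<^sup>+ y\<in>{0..1}. ennreal \<bar>In n M x y\<bar> \<partial>lborel) = ennreal (Max (R ` {..<n}))"
  proof (rule antisym)
    show "(SUP x\<in>{0..1}. \<integral>\<^sup>+ y\<in>{0..1}. ennreal \<bar>In n M x y\<bar> \<partial>lborel) \<le> ennreal (Max (R ` {..<n}))"
    proof (rule SUP_least)
      fix x :: real assume "x \<in> {0..1}"
      show "(\<integral>\<^sup>+ y\<in>{0..1}. ennreal \<bar>In n M x y\<bar> \<partial>lborel) \<le> ennreal (Max (R ` {..<n}))"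
      proof (cases "\<exists>i<n. x \<in> cell n i")
        case True
        then obtain i where i: "i < n" "x \<in> cell n i" by auto
        have "R i \<le> Max (R ` {..<n})" using fin i by auto
        then show ?thesis using In_row_int[OF i, of M] unfolding R_def by (simp add: ennreal_leI)
      next
        case False then show ?thesis using In_row_int0[OF False] by simp
      qed
    qed
    obtain i where i: "i < n" "Max (R ` {..<n}) = R i" using Max_in[OF fin] by auto
    have x: "real (Suc i) / real n \<in> {0..1}" using cell_mem[OF i(1)] cell_sub[OF i(1)] by blast
    have "ennreal (Max (R ` {..<n})) = (\<integral>\<^sup>+ y\<in>{0..1}. ennreal \<bar>In n M (real (Suc i) / real n) y\<bar> \<partial>lborel)"
      using In_row_int[OF i(1) cell_mem[OF i(1)], of M] i(2) unfolding R_def by simp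
    also have "\<dots> \<le> (SUP x\<in>{0..1}. \<integral>\<^sup>+ y\<in>{0..1}. ennreal \<bar>In n M x y\<bar> \<partial>lborel)"
      by (rule SUP_upper[OF x])
    finally show "ennreal (Max (R ` {..<n})) \<le> (SUP x\<in>{0..1}. \<integral>\<^sup>+ y\<in>{0..1}. ennreal \<bar>In n M x y\<bar> \<partial>lborel)" .
  qed
  then show ?thesis unfolding Linf1_def R_def[symmetric] using Mx0 by (simp only: enn2real_ennreal)
qed

lemma Max_diff:
  fixes f g :: "nat \<Rightarrow> real"
  assumes A: "finite A" "A \<noteq> {}" and d: "\<And>i. i \<in> A \<Longrightarrow> \<bar>f i - g i\<bar> \<le> e"
  shows "\<bar>Max (f ` A) - Max (g ` A)\<bar> \<le> e"
proof -
  have "Max (f ` A) \<in> f ` A" "Max (g ` A) \<in> g ` A" using A by (intro Max_in; simp)+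
  then obtain i k where i: "i \<in> A" "Max (f ` A) = f i" and k: "k \<in> A" "Max (g ` A) = g k" by blast
  have "g i \<le> Max (g ` A)" "f k \<le> Max (f ` A)" using i(1) k(1) A by auto
  moreover have "\<bar>f i - g i\<bar> \<le> e" "\<bar>f k - g k\<bar> \<le> e" using d i(1) k(1) by auto
  ultimately show ?thesis unfolding i(2) k(2) by linarith
qed



definition SF :: "(real \<Rightarrow> real \<Rightarrow> real) \<Rightarrow> ennreal" where
  "SF F = (SUP x\<in>{0..1}. \<integral>\<^sup>+ y\<in>{0..1}. ennreal \<bar>F x y\<bar> \<partial>lborel)"

lemma Linf1_le1:
  fixes F G :: "real \<Rightarrow> real \<Rightarrow> real"
  assumes mF: "\<And>x. x \<in> {0..1} \<Longrightarrow> (\<lambda>y. F x y * indicator {0..1} y) \<in> borel_measurable borel"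
    and mG: "\<And>x. x \<in> {0..1} \<Longrightarrow> (\<lambda>y. G x y * indicator {0..1} y) \<in> borel_measurable borel"
    and d: "\<And>x. x \<in> {0..1} \<Longrightarrow> (\<integral>\<^sup>+ y\<in>{0..1}. ennreal \<bar>F x y - G x y\<bar> \<partial>lborel) \<le> ennreal e"
    and e: "0 \<le> e" and fin: "SF G < \<infinity>"
  shows "SF F \<le> SF G + ennreal e" "SF F < \<infinity>" "Linf1 F \<le> Linf1 G + e"
proof -
  have pt: "(\<integral>\<^sup>+ y\<in>{0..1}. ennreal \<bar>F x y\<bar> \<partial>lborel) \<le> (\<integral>\<^sup>+ y\<in>{0..1}. ennreal \<bar>G x y\<bar> \<partial>lborel) + ennreal e"
    if x: "x \<in> {0..1}" for x
  proof -
    have m1: "(\<lambda>y. ennreal \<bar>G x y\<bar> * indicator {0..1} y) \<in> borel_measurable lborel"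
    proof -
      have "(\<lambda>y. ennreal \<bar>G x y * indicator {0..1} y\<bar>) \<in> borel_measurable borel" using mG[OF x] by measurable
      moreover have "(\<lambda>y. ennreal \<bar>G x y * indicator {0..1} y\<bar>) = (\<lambda>y. ennreal \<bar>G x y\<bar> * indicator {0..1} y)"
        by (auto simp: indicator_def)
      ultimately show ?thesis by simp
    qed
    have m2: "(\<lambda>y. ennreal \<bar>F x y - G x y\<bar> * indicator {0..1} y) \<in> borel_measurable lborel"
    proof -
      have "(\<lambda>y. ennreal \<bar>F x y * indicator {0..1} y - G x y * indicator {0..1} y\<bar>) \<in> borel_measurable borel"
        using mG[OF x] mF[OF x] by measurable
      moreover have "(\<lambda>y. ennreal \<bar>F x y * indicator {0..1} y - G x y * indicator {0..1} y\<bar>) = (\<lambda>y. ennreal \<bar>F x y - G x y\<bar> * indicator {0..1} y)"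
        by (auto simp: indicator_def)
      ultimately show ?thesis by simp
    qed
    have "(\<integral>\<^sup>+ y\<in>{0..1}. ennreal \<bar>F x y\<bar> \<partial>lborel) \<le> (\<integral>\<^sup>+ y. ennreal \<bar>G x y\<bar> * indicator {0..1} y + ennreal \<bar>F x y - G x y\<bar> * indicator {0..1} y \<partial>lborel)"
    proof (rule nn_integral_mono)
      fix y
      have "ennreal \<bar>F x y\<bar> \<le> ennreal (\<bar>G x y\<bar> + \<bar>F x y - G x y\<bar>)" by (intro ennreal_leI) linarith
      then show "ennreal \<bar>F x y\<bar> * indicator {0..1} y \<le> ennreal \<bar>G x y\<bar> * indicator {0..1} y + ennreal \<bar>F x y - G x y\<bar> * indicator {0..1} y"
        by (auto simp: indicator_def ennreal_plus)
    qed
    also have "\<dots> = (\<integral>\<^sup>+ y\<in>{0..1}. ennreal \<bar>G x y\<bar> \<partial>lborel) + (\<integral>\<^sup>+ y\<in>{0..1}. ennreal \<bar>F x y - G x y\<bar> \<partial>lborel)"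
      by (rule nn_integral_add[OF m1 m2])
    also have "\<dots> \<le> (\<integral>\<^sup>+ y\<in>{0..1}. ennreal \<bar>G x y\<bar> \<partial>lborel) + ennreal e"
      using d[OF x] by (rule add_left_mono)
    finally show ?thesis .
  qed
  show le: "SF F \<le> SF G + ennreal e"
    unfolding SF_def
  proof (rule SUP_least)
    fix x :: real assume x: "x \<in> {0..1}"
    have "(\<integral>\<^sup>+ y\<in>{0..1}. ennreal \<bar>G x y\<bar> \<partial>lborel) \<le> (SUP x\<in>{0..1}. \<integral>\<^sup>+ y\<in>{0..1}. ennreal \<bar>G x y\<bar> \<partial>lborel)"
      by (rule SUP_upper[OF x])
    then show "(\<integral>\<^sup>+ y\<in>{0..1}. ennreal \<bar>F x y\<bar> \<partial>lborel) \<le> (SUP x\<in>{0..1}. \<integral>\<^sup>+ y\<in>{0..1}. ennreal \<bar>G x y\<bar> \<partial>lborel) + ennreal e"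
      using pt[OF x] by (meson add_right_mono order_trans)
  qed
  show finF: "SF F < \<infinity>" using le fin by (metis ennreal_add_less_top ennreal_less_top order_le_less_trans infinity_ennreal_def)
  have "Linf1 F = enn2real (SF F)" "Linf1 G = enn2real (SF G)" unfolding Linf1_def SF_def by auto
  moreover have "enn2real (SF F) \<le> enn2real (SF G + ennreal e)"
    using le fin by (intro enn2real_mono) auto
  moreover have "enn2real (SF G + ennreal e) = enn2real (SF G) + e"
    using fin e by (subst enn2real_plus) auto
  ultimately show "Linf1 F \<le> Linf1 G + e" by simp
qed

lemma Linf1_diff:
  fixes F G :: "real \<Rightarrow> real \<Rightarrow> real"
  assumes mF: "\<And>x. x \<in> {0..1} \<Longrightarrow> (\<lambda>y. F x y * indicator {0..1} y) \<in> borel_measurable borel"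
    and mG: "\<And>x. x \<in> {0..1} \<Longrightarrow> (\<lambda>y. G x y * indicator {0..1} y) \<in> borel_measurable borel"
    and d: "\<And>x. x \<in> {0..1} \<Longrightarrow> (\<integral>\<^sup>+ y\<in>{0..1}. ennreal \<bar>F x y - G x y\<bar> \<partial>lborel) \<le> ennreal e"
    and e: "0 \<le> e" and fin: "SF G < \<infinity>"
  shows "\<bar>Linf1 F - Linf1 G\<bar> \<le> e"
proof -
  have 1: "Linf1 F \<le> Linf1 G + e" "SF F < \<infinity>" using Linf1_le1[OF mF mG d e fin] by auto
  have d': "(\<integral>\<^sup>+ y\<in>{0..1}. ennreal \<bar>G x y - F x y\<bar> \<partial>lborel) \<le> ennreal e" if "x \<in> {0..1}" for x
    using d[OF that] by (simp add: abs_minus_commute)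
  have 2: "Linf1 G \<le> Linf1 F + e" using Linf1_le1[OF mG mF d' e 1(2)] by auto
  show ?thesis using 1 2 by linarith
qed

lemma meas_abs_diff:
  fixes F G :: "real \<Rightarrow> real"
  assumes "(\<lambda>y. F y * indicator A y) \<in> borel_measurable borel" "(\<lambda>y. G y * indicator A y) \<in> borel_measurable borel"
  shows "(\<lambda>y. ennreal \<bar>F y - G y\<bar> * indicator A y) \<in> borel_measurable lborel"
proof -
  have "(\<lambda>y. ennreal \<bar>F y * indicator A y - G y * indicator A y\<bar>) \<in> borel_measurable borel"
    using assms by measurable
  moreover have "(\<lambda>y. ennreal \<bar>F y * indicator A y - G y * indicator A y\<bar>) = (\<lambda>y. ennreal \<bar>F y - G y\<bar> * indicator A y)"
    by (auto simp: indicator_def)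
  ultimately show ?thesis by simp
qed

lemma In_min: "0 \<le> R \<Longrightarrow> In n (\<lambda>i j. min (M i j) R) x y = min (In n M x y) R"
proof (cases "(\<exists>i<n. x \<in> cell n i) \<and> (\<exists>j<n. y \<in> cell n j)")
  case True
  then obtain i j where "i < n" "j < n" "x \<in> cell n i" "y \<in> cell n j" by auto
  then show ?thesis by (simp add: In_eval)
next
  case False
  then show "0 \<le> R \<Longrightarrow> ?thesis" using In_zero[of n x y] by auto
qed

lemma In_bound: "\<bar>In n M x y\<bar> \<le> (\<Sum>i<n. \<Sum>j<n. \<bar>M i j\<bar>)"
proof (cases "(\<exists>i<n. x \<in> cell n i) \<and> (\<exists>j<n. y \<in> cell n j)")
  case True
  then obtain i j where ij: "i < n" "j < n" "x \<in> cell n i" "y \<in> cell n j" by auto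
  have "\<bar>M i j\<bar> \<le> (\<Sum>j<n. \<bar>M i j\<bar>)" using ij by (intro member_le_sum) auto
  also have "\<dots> \<le> (\<Sum>i<n. \<Sum>j<n. \<bar>M i j\<bar>)" using ij by (intro member_le_sum sum_nonneg) auto
  finally show ?thesis using ij by (simp add: In_eval)
next
  case False
  then show ?thesis using In_zero[of n x y M] by (auto intro!: sum_nonneg)
qed

lemma min_abs_bound:
  fixes a R k b :: real
  assumes "b \<le> R"
  shows "\<bar>min a R - k\<bar> \<le> \<bar>a - k\<bar> + \<bar>k - b\<bar>"
  using assms by (simp add: min_def abs_if)

lemma In_meas[measurable]: "(\<lambda>y. In n M x y) \<in> borel_measurable borel"
  unfolding In_def by measurable



lemma prod_borel_sets[measurable]:
  "A \<in> sets borel \<Longrightarrow> B \<in> sets borel \<Longrightarrow> A \<times> B \<in> sets (borel :: (real \<times> real) measure)"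
  by (metis borel_prod pair_measureI)

lemma K_glob_meas:
  fixes K :: "real \<Rightarrow> real \<Rightarrow> real"
  assumes K_meas: "(\<lambda>(x, y). K x y) \<in> borel_measurable
                      (restrict_space (lborel \<Otimes>\<^sub>M lborel) ({0..1} \<times> {0..1}))"
  shows "(\<lambda>z. indicator ({0..1} \<times> {0..1}) z * K (fst z) (snd z)) \<in> borel_measurable (lborel \<Otimes>\<^sub>M lborel)"
proof -
  have "({0..1::real} \<times> {0..1::real}) \<inter> space (lborel \<Otimes>\<^sub>M lborel) \<in> sets (lborel \<Otimes>\<^sub>M lborel)"
    by (simp add: space_pair_measure)
  from borel_measurable_restrict_space_iff[OF this] K_meas
  have "(\<lambda>z. indicator ({0..1} \<times> {0..1}) z *\<^sub>R (case z of (x, y) \<Rightarrow> K x y)) \<in> borel_measurable (lborel \<Otimes>\<^sub>M lborel)"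
    by blast
  moreover have "(\<lambda>z. indicator ({0..1} \<times> {0..1}) z *\<^sub>R (case z of (x, y) \<Rightarrow> K x y)) = (\<lambda>z. indicator ({0..1} \<times> {0..1}) z * K (fst z) (snd z))"
    by (auto simp: case_prod_beta)
  ultimately show ?thesis by simp
qed

lemma K_sec_meas:
  fixes K :: "real \<Rightarrow> real \<Rightarrow> real"
  assumes K_meas: "(\<lambda>(x, y). K x y) \<in> borel_measurable
                      (restrict_space (lborel \<Otimes>\<^sub>M lborel) ({0..1} \<times> {0..1}))"
    and x: "x \<in> {0..1}"
  shows "(\<lambda>y. K x y * indicator {0..1} y) \<in> borel_measurable borel"
proof -
  have "(\<lambda>y. indicator ({0..1} \<times> {0..1}) (x, y) * K (fst (x, y)) (snd (x, y))) \<in> borel_measurable lborel"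
    using measurable_Pair2[OF K_glob_meas[OF K_meas], of x] by simp
  moreover have "(\<lambda>y. indicator ({0..1} \<times> {0..1}) (x, y) * K (fst (x, y)) (snd (x, y))) = (\<lambda>y. K x y * indicator {0..1} y)"
    using x by (auto simp: indicator_def)
  ultimately show ?thesis by (simp add: measurable_lborel1)
qed

lemma Pn_nonneg:
  fixes K :: "real \<Rightarrow> real \<Rightarrow> real"
  assumes K_nonneg: "\<And>x y. x \<in> {0..1} \<Longrightarrow> y \<in> {0..1} \<Longrightarrow> 0 \<le> K x y"
    and ij: "i < n" "j < n"
  shows "0 \<le> Pn n K i j"
proof -
  have "0 \<le> (LINT z : cell n i \<times> cell n j | (lborel :: (real \<times> real) measure). K (fst z) (snd z))"
    unfolding set_lebesgue_integral_def
  proof (rule Bochner_Integration.integral_nonneg)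
    fix z :: "real \<times> real"
    show "0 \<le> indicator (cell n i \<times> cell n j) z *\<^sub>R K (fst z) (snd z)"
      using cell_sub[OF ij(1)] cell_sub[OF ij(2)]
      by (cases z) (auto simp: indicator_def subset_iff intro!: K_nonneg)
  qed
  then show ?thesis unfolding Pn_def by simp
qed

lemma Pn_row:
  fixes K :: "real \<Rightarrow> real \<Rightarrow> real"
  assumes K_meas: "(\<lambda>(x, y). K x y) \<in> borel_measurable
                      (restrict_space (lborel \<Otimes>\<^sub>M lborel) ({0..1} \<times> {0..1}))"
    and K_nonneg: "\<And>x y. x \<in> {0..1} \<Longrightarrow> y \<in> {0..1} \<Longrightarrow> 0 \<le> K x y"
    and K_bdd: "(SUP x\<in>{0..1}. \<integral>\<^sup>+ y\<in>{0..1}. ennreal (K x y) \<partial>lborel) < \<infinity>"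
    and i: "i < n"
  shows "(\<Sum>j<n. Pn n K i j) \<le> real n * enn2real (SUP x\<in>{0..1}. \<integral>\<^sup>+ y\<in>{0..1}. ennreal (K x y) \<partial>lborel)"
proof -
  define C' where "C' = (SUP x\<in>{0..1}. \<integral>\<^sup>+ y\<in>{0..1}. ennreal (K x y) \<partial>lborel)"
  define g where "g = (\<lambda>z::real\<times>real. indicator ({0..1} \<times> {0..1}) z * K (fst z) (snd z))"
  have n: "0 < n" using i by simp
  have gm2: "g \<in> borel_measurable (lborel \<Otimes>\<^sub>M lborel)" unfolding g_def by (rule K_glob_meas[OF K_meas])
  have gm: "g \<in> borel_measurable lborel" using gm2 by (simp add: lborel_prod)
  have g0: "0 \<le> g z" for z using K_nonneg[of "fst z" "snd z"] by (cases z) (auto simp: g_def indicator_def)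
  define I where "I j = (\<integral>\<^sup>+ z. ennreal (indicator (cell n i \<times> cell n j) z * g z) \<partial>lborel)" for j
  define T where "T = (\<integral>\<^sup>+ z. ennreal (indicator (cell n i \<times> {0..1}) z * g z) \<partial>lborel)"
  have PnI: "Pn n K i j = (real n)\<^sup>2 * enn2real (I j)" if j: "j < n" for j
  proof -
    have "(LINT z : cell n i \<times> cell n j | (lborel :: (real \<times> real) measure). K (fst z) (snd z))
          = integral\<^sup>L lborel (\<lambda>z. indicator (cell n i \<times> cell n j) z * g z)"
      unfolding set_lebesgue_integral_def
    proof (intro Bochner_Integration.integral_cong refl)
      fix z :: "real \<times> real"
      show "indicator (cell n i \<times> cell n j) z *\<^sub>R K (fst z) (snd z) = indicator (cell n i \<times> cell n j) z * g z"
        using cell_sub[OF i] cell_sub[OF j] by (cases z) (auto simp: g_def indicator_def)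
    qed
    also have "\<dots> = enn2real (I j)" unfolding I_def
      by (rule integral_eq_nn_integral) (use gm g0 in \<open>auto intro!: borel_measurable_times\<close>)
    finally show ?thesis unfolding Pn_def by simp
  qed
  have sumI: "(\<Sum>j<n. I j) \<le> T"
  proof -
    have "(\<Sum>j<n. I j) = (\<integral>\<^sup>+ z. (\<Sum>j<n. ennreal (indicator (cell n i \<times> cell n j) z * g z)) \<partial>lborel)"
      unfolding I_def by (rule nn_integral_sum[symmetric]) (use gm in auto)
    also have "\<dots> \<le> T" unfolding T_def
    proof (rule nn_integral_mono)
      fix z :: "real \<times> real"
      obtain x y where z: "z = (x, y)" by (cases z)
      have eq: "ennreal (indicator (cell n i \<times> cell n j) z * g z) = ennreal (indicator (cell n i) x * g z) * indicator (cell n j) y" for j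
        unfolding z by (auto simp: indicator_def)
      show "(\<Sum>j<n. ennreal (indicator (cell n i \<times> cell n j) z * g z)) \<le> ennreal (indicator (cell n i \<times> {0..1}) z * g z)"
      proof (cases "\<exists>j<n. y \<in> cell n j")
        case True
        then obtain j where j: "j < n" "y \<in> cell n j" by auto
        have "y \<in> {0..1}" using cell_sub[OF j(1)] j(2) by blast
        then show ?thesis unfolding eq using sum_ind1[OF j, of "\<lambda>j. ennreal (indicator (cell n i) x * g z)"]
          by (simp add: z indicator_def)
      next
        case False
        then show ?thesis unfolding eq using sum_ind0[OF False, of "\<lambda>j. ennreal (indicator (cell n i) x * g z)"]
          by simp
      qed
    qed
    finally show ?thesis .
  qed
  have T_le: "T \<le> C' * ennreal (1 / real n)"
  proof -
    have "T = (\<integral>\<^sup>+ x. \<integral>\<^sup>+ y. ennreal (indicator (cell n i \<times> {0..1}) (x, y) * g (x, y)) \<partial>lborel \<partial>lborel)"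
      unfolding T_def lborel_prod[symmetric]
      by (rule lborel.nn_integral_fst[symmetric]) (use gm2 in measurable)
    also have "\<dots> \<le> (\<integral>\<^sup>+ x. C' * indicator (cell n i) x \<partial>lborel)"
    proof (rule nn_integral_mono)
      fix x :: real
      show "(\<integral>\<^sup>+ y. ennreal (indicator (cell n i \<times> {0..1}) (x, y) * g (x, y)) \<partial>lborel) \<le> C' * indicator (cell n i) x"
      proof (cases "x \<in> cell n i")
        case True
        then have x: "x \<in> {0..1}" using cell_sub[OF i] by blast
        have "(\<integral>\<^sup>+ y. ennreal (indicator (cell n i \<times> {0..1}) (x, y) * g (x, y)) \<partial>lborel)
              = (\<integral>\<^sup>+ y\<in>{0..1}. ennreal (K x y) \<partial>lborel)"
          using True x by (intro nn_integral_cong) (auto simp: g_def indicator_def)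
        also have "\<dots> \<le> C'" unfolding C'_def by (rule SUP_upper[OF x])
        finally show ?thesis using True by simp
      next
        case False then show ?thesis by (simp add: indicator_def)
      qed
    qed
    also have "\<dots> = C' * ennreal (1 / real n)"
      using n by (simp add: nn_integral_cmult_indicator emeasure_cell)
    finally show ?thesis .
  qed
  have Cfin: "C' < \<infinity>" using K_bdd unfolding C'_def .
  have Tfin: "T < \<infinity>" using T_le Cfin
    by (metis ennreal_mult_less_top ennreal_less_top infinity_ennreal_def order_le_less_trans)
  have Ifin: "I j < \<infinity>" if "j < n" for j
  proof -
    have "I j \<le> (\<Sum>j<n. I j)" using that by (intro member_le_sum) auto
    then show ?thesis using sumI Tfin by (meson order_le_less_trans)
  qed
  have "(\<Sum>j<n. Pn n K i j) = (real n)\<^sup>2 * (\<Sum>j<n. enn2real (I j))"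
    by (simp add: PnI sum_distrib_left)
  also have "(\<Sum>j<n. enn2real (I j)) = enn2real (\<Sum>j<n. I j)"
    using Ifin by (subst enn2real_sum) (auto simp: top.not_eq_extremum)
  also have "\<dots> \<le> enn2real (C' * ennreal (1 / real n))"
    using sumI T_le Cfin by (intro enn2real_mono) (auto simp: ennreal_mult_less_top)
  also have "\<dots> = enn2real C' / real n" by (simp add: enn2real_mult)
  finally have "(\<Sum>j<n. Pn n K i j) \<le> (real n)\<^sup>2 * (enn2real C' / real n)"
    by (simp add: mult_left_mono)
  also have "\<dots> = real n * enn2real C'" using n by (simp add: power2_eq_square)
  finally show ?thesis unfolding C'_def .
qed



lemma (in prob_space) prob_row:
  fixes L :: "nat \<Rightarrow> 'a \<Rightarrow> real" and w :: "nat \<Rightarrow> real" and r A l t :: real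
  assumes i: "i < n" and r: "0 < r"
    and meas: "\<And>j. j < n \<Longrightarrow> L j \<in> borel_measurable M"
    and vals: "\<And>j. j < n \<Longrightarrow> j \<noteq> i \<Longrightarrow> AE \<omega> in M. r * L j \<omega> \<in> {0,1}"
    and pr: "\<And>j. j < n \<Longrightarrow> j \<noteq> i \<Longrightarrow> prob {\<omega>\<in>space M. r * L j \<omega> = 1} = r * w j"
    and ind: "indep_vars (\<lambda>_. borel) L {0..<n}"
    and muA: "(\<Sum>j\<in>{..<n}-{i}. r * w j) \<le> A"
    and l: "0 \<le> l" "l \<le> 1"
  shows "prob {\<omega>\<in>space M. t \<le> \<bar>(\<Sum>j\<in>{..<n}-{i}. r * L j \<omega>) - (\<Sum>j\<in>{..<n}-{i}. r * w j)\<bar>}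
           \<le> 2 * exp (A * l\<^sup>2 - l * t)"
proof -
  define J where "J = {..<n} - {i}"
  define X where "X = (\<lambda>j \<omega>. r * L j \<omega>)"
  define p where "p = (\<lambda>j. r * w j)"
  have J: "finite J" unfolding J_def by auto
  have indX: "indep_vars (\<lambda>_. borel) X J"
  proof -
    have "indep_vars (\<lambda>_. borel) (\<lambda>j \<omega>. r * L j \<omega>) {0..<n}"
      by (rule indep_vars_compose2[OF ind]) auto
    then show ?thesis unfolding X_def J_def by (rule indep_vars_subset) auto
  qed
  have rv: "X j \<in> borel_measurable M" if "j \<in> J" for j
    using meas[of j] that unfolding X_def J_def by auto
  have vX: "AE \<omega> in M. X j \<omega> \<in> {0,1}" if "j \<in> J" for j
    using vals[of j] that unfolding X_def J_def by auto
  have pX: "prob {\<omega>\<in>space M. X j \<omega> = 1} = p j" if "j \<in> J" for j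
    using pr[of j] that unfolding X_def J_def p_def by auto
  have mu0: "0 \<le> (\<Sum>j\<in>J. p j)"
    by (intro sum_nonneg) (metis pX measure_nonneg)
  have muA': "(\<Sum>j\<in>J. p j) \<le> A" using muA unfolding J_def p_def .
  have S_meas: "(\<lambda>\<omega>. \<Sum>j\<in>J. X j \<omega>) \<in> borel_measurable M" using rv by measurable
  have "{\<omega>\<in>space M. t \<le> \<bar>(\<Sum>j\<in>J. X j \<omega>) - (\<Sum>j\<in>J. p j)\<bar>}
        \<subseteq> {\<omega>\<in>space M. l * t \<le> l * ((\<Sum>j\<in>J. X j \<omega>) - (\<Sum>j\<in>J. p j))}
          \<union> {\<omega>\<in>space M. l * t \<le> (- l) * ((\<Sum>j\<in>J. X j \<omega>) - (\<Sum>j\<in>J. p j))}"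
  proof safe
    fix \<omega> assume that: "t \<le> \<bar>(\<Sum>j\<in>J. X j \<omega>) - (\<Sum>j\<in>J. p j)\<bar>"
      "\<not> l * t \<le> - l * ((\<Sum>j\<in>J. X j \<omega>) - (\<Sum>j\<in>J. p j))"
    then show "l * t \<le> l * ((\<Sum>j\<in>J. X j \<omega>) - (\<Sum>j\<in>J. p j))"
    proof -
      have "l * t \<le> l * \<bar>(\<Sum>j\<in>J. X j \<omega>) - (\<Sum>j\<in>J. p j)\<bar>" using l that(1) by (intro mult_left_mono) auto
      moreover have "l * \<bar>(\<Sum>j\<in>J. X j \<omega>) - (\<Sum>j\<in>J. p j)\<bar> = l * ((\<Sum>j\<in>J. X j \<omega>) - (\<Sum>j\<in>J. p j))
         \<or> l * \<bar>(\<Sum>j\<in>J. X j \<omega>) - (\<Sum>j\<in>J. p j)\<bar> = - l * ((\<Sum>j\<in>J. X j \<omega>) - (\<Sum>j\<in>J. p j))"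
        by (auto simp: abs_if algebra_simps)
      ultimately show ?thesis using that(2) by auto
    qed
  qed
  then have "prob {\<omega>\<in>space M. t \<le> \<bar>(\<Sum>j\<in>J. X j \<omega>) - (\<Sum>j\<in>J. p j)\<bar>}
        \<le> prob ({\<omega>\<in>space M. l * t \<le> l * ((\<Sum>j\<in>J. X j \<omega>) - (\<Sum>j\<in>J. p j))}
          \<union> {\<omega>\<in>space M. l * t \<le> (- l) * ((\<Sum>j\<in>J. X j \<omega>) - (\<Sum>j\<in>J. p j))})"
    using S_meas by (intro finite_measure_mono) auto
  also have "\<dots> \<le> prob {\<omega>\<in>space M. l * t \<le> l * ((\<Sum>j\<in>J. X j \<omega>) - (\<Sum>j\<in>J. p j))}
          + prob {\<omega>\<in>space M. l * t \<le> (- l) * ((\<Sum>j\<in>J. X j \<omega>) - (\<Sum>j\<in>J. p j))}"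
    using S_meas by (intro measure_Un_le) auto
  also have "\<dots> \<le> exp ((\<Sum>j\<in>J. p j) * l\<^sup>2 - l * t) + exp ((\<Sum>j\<in>J. p j) * (- l)\<^sup>2 - l * t)"
    by (intro add_mono tail_bound[OF J indX rv vX pX]) (use l in auto)
  also have "\<dots> \<le> exp (A * l\<^sup>2 - l * t) + exp (A * l\<^sup>2 - l * t)"
    using muA' by (intro add_mono) (auto intro: mult_right_mono)
  finally show ?thesis unfolding J_def X_def p_def by simp
qed



theorem lemma3p5:
  fixes K :: "real \<Rightarrow> real \<Rightarrow> real"
    and \<rho> :: "nat \<Rightarrow> real"
    and \<gamma> :: real
    and M :: "'a measure"
    and \<Lambda> :: "nat \<Rightarrow> nat \<Rightarrow> nat \<Rightarrow> 'a \<Rightarrow> real"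
  defines "w \<equiv> (\<lambda>n i j. min (Pn n K i j) (1 / \<rho> n))"
  assumes K_meas: "(\<lambda>(x, y). K x y) \<in> borel_measurable
                      (restrict_space (lborel \<Otimes>\<^sub>M lborel) ({0..1} \<times> {0..1}))"
    and K_nonneg: "\<And>x y. x \<in> {0..1} \<Longrightarrow> y \<in> {0..1} \<Longrightarrow> 0 \<le> K x y"
    and K_sym: "\<And>x y. x \<in> {0..1} \<Longrightarrow> y \<in> {0..1} \<Longrightarrow> K x y = K y x"
    and K_bdd: "(SUP x\<in>{0..1}. \<integral>\<^sup>+ y\<in>{0..1}. ennreal (K x y) \<partial>lborel) < \<infinity>"
    and rho_pos: "\<And>n. 0 < \<rho> n"
    and rho_lim: "\<rho> \<longlonglongrightarrow> 0"
    and gamma: "\<gamma> > 1"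
    and rho_growth: "(\<lambda>n. ln (real n) powr \<gamma>) \<in> o(\<lambda>n. real n * \<rho> n)"
    and M: "prob_space M"
    and Lam_meas: "\<And>n i j. i < n \<Longrightarrow> j < n \<Longrightarrow> \<Lambda> n i j \<in> borel_measurable M"
    and Lam_bern_vals: "\<And>n i j. i < n \<Longrightarrow> j < n \<Longrightarrow> i \<noteq> j \<Longrightarrow>
                          (AE \<omega> in M. \<rho> n * \<Lambda> n i j \<omega> \<in> {0, 1})"
    and Lam_bern_prob: "\<And>n i j. i < n \<Longrightarrow> j < n \<Longrightarrow> i \<noteq> j \<Longrightarrow>
                          measure M {\<omega> \<in> space M. \<rho> n * \<Lambda> n i j \<omega> = 1} = \<rho> n * w n i j"
    and Lam_diag: "\<And>n i \<omega>. i < n \<Longrightarrow> \<omega> \<in> space M \<Longrightarrow> \<Lambda> n i i \<omega> \<in> {0, 1 / \<rho> n}"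
    and Lam_indep: "\<And>n i. i < n \<Longrightarrow>
                      prob_space.indep_vars M (\<lambda>_. borel) (\<lambda>j. \<Lambda> n i j) {0..<n}"
  shows "(AE \<omega> in M. (\<lambda>n. Linf1 (In n (\<lambda>i j. \<Lambda> n i j \<omega>)) - Linf1 (In n (w n)))
                          \<longlonglongrightarrow> 0)
       \<and> ((\<forall>\<epsilon>>0. \<exists>N. \<forall>n\<ge>N. \<forall>x\<in>{0..1}.
              (\<integral>\<^sup>+ y\<in>{0..1}. ennreal \<bar>In n (Pn n K) x y - K x y\<bar> \<partial>lborel) < ennreal \<epsilon>)
          \<longrightarrow> (AE \<omega> in M. (\<lambda>n. Linf1 (In n (\<lambda>i j. \<Lambda> n i j \<omega>))) \<longlonglongrightarrow> Linf1 K))"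
proof -
  interpret P: prob_space M by (rule M)
  define C where "C = enn2real (SUP x\<in>{0..1}. \<integral>\<^sup>+ y\<in>{0..1}. ennreal (K x y) \<partial>lborel)"
  have C0: "0 \<le> C" unfolding C_def by simp
  define C1 where "C1 = C + 1"
  have C1: "1 \<le> C1" using C0 unfolding C1_def by simp
  have row: "(\<Sum>j<n. Pn n K i j) \<le> real n * C" if "i < n" for n i
    unfolding C_def by (rule Pn_row[OF K_meas K_nonneg K_bdd that])
  have Pn0: "0 \<le> Pn n K i j" if "i < n" "j < n" for n i j using Pn_nonneg[OF K_nonneg that] .
  have w0: "0 \<le> w n i j" if "i < n" "j < n" for n i j
    using Pn0[OF that] rho_pos[of n] unfolding w_def by simp
  have wR: "w n i j \<le> 1 / \<rho> n" for n i j unfolding w_def by simp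
  have wP: "w n i j \<le> Pn n K i j" for n i j unfolding w_def by simp
  define r where "r n i \<omega> = (\<Sum>j<n. \<bar>\<Lambda> n i j \<omega>\<bar>) / real n" for n i \<omega>
  define m where "m n i = (\<Sum>j<n. \<bar>w n i j\<bar>) / real n" for n i

  have G: "AE \<omega> in M. \<forall>n i j. i < n \<longrightarrow> j < n \<longrightarrow> i \<noteq> j \<longrightarrow> \<rho> n * \<Lambda> n i j \<omega> \<in> {0,1}"
  proof -
    have "AE \<omega> in M. \<forall>t::nat\<times>nat\<times>nat. fst (snd t) < fst t \<longrightarrow> snd (snd t) < fst t \<longrightarrow> fst (snd t) \<noteq> snd (snd t)
            \<longrightarrow> \<rho> (fst t) * \<Lambda> (fst t) (fst (snd t)) (snd (snd t)) \<omega> \<in> {0,1}"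
      unfolding AE_all_countable
    proof
      fix t :: "nat\<times>nat\<times>nat"
      obtain n i j where t: "t = (n, i, j)" by (cases t)
      show "AE \<omega> in M. fst (snd t) < fst t \<longrightarrow> snd (snd t) < fst t \<longrightarrow> fst (snd t) \<noteq> snd (snd t)
            \<longrightarrow> \<rho> (fst t) * \<Lambda> (fst t) (fst (snd t)) (snd (snd t)) \<omega> \<in> {0,1}"
      proof (cases "i < n \<and> j < n \<and> i \<noteq> j")
        case True
        then show ?thesis using Lam_bern_vals[of i n j] t by (auto elim!: eventually_mono)
      next
        case False
        then show ?thesis using t by auto
      qed
    qed
    then show ?thesis by eventually_elim (metis fst_conv snd_conv)
  qed

  have dev: "AE \<omega> in M. eventually (\<lambda>n. \<forall>i<n. \<bar>r n i \<omega> - m n i\<bar> \<le> \<epsilon>) sequentially"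
    if eps: "0 < \<epsilon>" "\<epsilon> \<le> 1" for \<epsilon>
  proof -
    define l where "l = \<epsilon> / (4 * C1)"
    define c where "c = \<epsilon>\<^sup>2 / (16 * C1)"
    have l: "0 \<le> l" "l \<le> 1" using eps C1 unfolding l_def by (auto simp: field_simps)
    have c: "0 < c" using eps C1 unfolding c_def by auto
    have c2: "c \<le> \<epsilon> / 16"
    proof -
      have "\<epsilon>\<^sup>2 \<le> \<epsilon> * C1" using eps C1 by (simp add: power2_eq_square mult_mono)
      then show ?thesis unfolding c_def using C1 by (simp add: field_simps)
    qed
    define S where "S n i \<omega> = (\<Sum>j\<in>{..<n}-{i}. \<rho> n * \<Lambda> n i j \<omega>)" for n i \<omega>
    define \<mu> where "\<mu> n i = (\<Sum>j\<in>{..<n}-{i}. \<rho> n * w n i j)" for n i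
    define t where "t n = \<epsilon> * real n * \<rho> n / 2" for n
    define E where "E n = (\<Union>i\<in>{..<n}. {\<omega>\<in>space M. t n \<le> \<bar>S n i \<omega> - \<mu> n i\<bar>})" for n
    have Ei: "{\<omega>\<in>space M. t n \<le> \<bar>S n i \<omega> - \<mu> n i\<bar>} \<in> P.events" if "i < n" for n i
    proof -
      have "(\<lambda>\<omega>. S n i \<omega>) \<in> borel_measurable M"
        unfolding S_def using that by (auto intro!: borel_measurable_sum borel_measurable_times Lam_meas)
      then show ?thesis by measurable
    qed
    have E_sets: "E n \<in> P.events" for n unfolding E_def using Ei by auto
    have muA: "\<mu> n i \<le> C1 * (real n * \<rho> n)" if i: "i < n" for n i
    proof -
      have "\<mu> n i \<le> (\<Sum>j<n. \<rho> n * w n i j)"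
        unfolding \<mu>_def using w0[OF i] rho_pos[of n] by (intro sum_mono2) auto
      also have "\<dots> \<le> (\<Sum>j<n. \<rho> n * Pn n K i j)"
        using wP rho_pos[of n] by (intro sum_mono mult_left_mono) auto
      also have "\<dots> = \<rho> n * (\<Sum>j<n. Pn n K i j)" by (simp add: sum_distrib_left)
      also have "\<dots> \<le> \<rho> n * (real n * C)" using row[OF i] rho_pos[of n] by (intro mult_left_mono) auto
      also have "\<dots> \<le> C1 * (real n * \<rho> n)"
        using rho_pos[of n] C0 unfolding C1_def by (simp add: algebra_simps)
      finally show ?thesis .
    qed
    have Pi: "P.prob {\<omega>\<in>space M. t n \<le> \<bar>S n i \<omega> - \<mu> n i\<bar>} \<le> 2 * exp (- c * (real n * \<rho> n))"
      if i: "i < n" for n i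
    proof -
      have vals: "AE \<omega> in M. \<rho> n * \<Lambda> n i j \<omega> \<in> {0,1}" if "j < n" "j \<noteq> i" for j
        using Lam_bern_vals[OF i that(1)] that by auto
      have prj: "P.prob {\<omega>\<in>space M. \<rho> n * \<Lambda> n i j \<omega> = 1} = \<rho> n * w n i j" if "j < n" "j \<noteq> i" for j
        using Lam_bern_prob[OF i that(1)] that by auto
      have "P.prob {\<omega>\<in>space M. t n \<le> \<bar>S n i \<omega> - \<mu> n i\<bar>} \<le> 2 * exp (C1 * (real n * \<rho> n) * l\<^sup>2 - l * t n)"
        unfolding S_def \<mu>_def
        by (rule P.prob_row[where L="\<lambda>j. \<Lambda> n i j" and w="w n i", OF i rho_pos Lam_meas[OF i] vals prj
              Lam_indep[OF i] muA[OF i, unfolded \<mu>_def] l])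
      also have "C1 * (real n * \<rho> n) * l\<^sup>2 - l * t n = - c * (real n * \<rho> n)"
        unfolding l_def c_def t_def using C1 by (simp add: field_simps power2_eq_square)
      finally show ?thesis .
    qed
    have PE: "P.prob (E n) \<le> real n * (2 * exp (- c * (real n * \<rho> n)))" for n
    proof -
      have "P.prob (E n) \<le> (\<Sum>i<n. P.prob {\<omega>\<in>space M. t n \<le> \<bar>S n i \<omega> - \<mu> n i\<bar>})"
        unfolding E_def by (rule measure_UNION_le) (use Ei in auto)
      also have "\<dots> \<le> (\<Sum>i<n. 2 * exp (- c * (real n * \<rho> n)))"
        by (intro sum_mono Pi) auto
      finally show ?thesis by simp
    qed
    have ev_growth: "eventually (\<lambda>n. 3 \<le> real n \<and> 3 * ln (real n) \<le> c * (real n * \<rho> n)) sequentially"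
    proof -
      have "eventually (\<lambda>n. norm (ln (real n) powr \<gamma>) \<le> (c/3) * norm (real n * \<rho> n)) at_top"
        using landau_o.smallD[OF rho_growth, of "c/3"] c by simp
      moreover have "eventually (\<lambda>n::nat. 3 \<le> n) sequentially" by (rule eventually_ge_at_top)
      ultimately show ?thesis
      proof eventually_elim
        case (elim n)
        have n3: "3 \<le> real n" using elim(2) by simp
        have "exp 1 \<le> real n" using exp_le n3 by linarith
        then have "ln (exp 1) \<le> ln (real n)" using n3 by (subst ln_le_cancel_iff) auto
        then have ln1: "1 \<le> ln (real n)" by simp
        have "ln (real n) = ln (real n) powr 1" using ln1 by simp
        also have "\<dots> \<le> ln (real n) powr \<gamma>" by (rule powr_mono) (use gamma ln1 in auto)
        also have "\<dots> = norm (ln (real n) powr \<gamma>)" by simp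
        also have "\<dots> \<le> (c/3) * norm (real n * \<rho> n)" by (rule elim(1))
        also have "\<dots> = (c/3) * (real n * \<rho> n)" using rho_pos[of n] by simp
        finally have "ln (real n) \<le> (c/3) * (real n * \<rho> n)" .
        then show ?case using n3 by (simp add: field_simps)
      qed
    qed
    have summ: "summable (\<lambda>n. P.prob (E n))"
    proof -
      obtain N where N: "\<And>n. n \<ge> N \<Longrightarrow> 3 \<le> real n \<and> 3 * ln (real n) \<le> c * (real n * \<rho> n)"
        using ev_growth by (auto simp: eventually_sequentially)
      show ?thesis
      proof (rule summable_comparison_test'[where g="\<lambda>n. 2 * inverse (real n ^ 2)" and N=N])
        show "summable (\<lambda>n. 2 * inverse (real n ^ 2))"
          by (intro summable_mult inverse_power_summable) auto
        fix n assume "N \<le> n"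
        then have n3: "3 \<le> real n" and g: "3 * ln (real n) \<le> c * (real n * \<rho> n)" using N by auto
        have npos: "0 < real n" using n3 by linarith
        have "exp (- c * (real n * \<rho> n)) \<le> exp (- (3 * ln (real n)))" using g by simp
        also have "exp (3 * ln (real n)) = real n ^ 3"
          using exp_of_nat_mult[of 3 "ln (real n)"] npos by simp
        then have "exp (- (3 * ln (real n))) = inverse (real n ^ 3)" by (simp add: exp_minus)
        finally have ex: "exp (- c * (real n * \<rho> n)) \<le> inverse (real n ^ 3)" .
        have "norm (P.prob (E n)) = P.prob (E n)" by simp
        also have "\<dots> \<le> real n * (2 * exp (- c * (real n * \<rho> n)))" by (rule PE)
        also have "\<dots> \<le> real n * (2 * inverse (real n ^ 3))" using ex npos by simp
        also have "\<dots> = 2 * inverse (real n ^ 2)" using npos by (simp add: field_simps power3_eq_cube power2_eq_square)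
        finally show "norm (P.prob (E n)) \<le> 2 * inverse (real n ^ 2)" .
      qed
    qed
    have BC: "AE \<omega> in M. eventually (\<lambda>n. \<omega> \<in> space M - E n) sequentially"
      by (rule borel_cantelli_AE1[OF E_sets]) (auto simp: summ P.emeasure_finite less_top[symmetric])
    have ev_det: "eventually (\<lambda>n. 0 < n \<and> 2 / \<epsilon> \<le> real n * \<rho> n) sequentially"
      using ev_growth
    proof eventually_elim
      case (elim n)
      have n3: "3 \<le> real n" using elim by simp
      have "exp 1 \<le> real n" using exp_le n3 by linarith
      then have "ln (exp 1) \<le> ln (real n)" using n3 by (subst ln_le_cancel_iff) auto
      then have ln1: "1 \<le> ln (real n)" by simp
      have X: "3 \<le> c * (real n * \<rho> n)" using elim ln1 by linarith
      have X0: "0 \<le> real n * \<rho> n" using rho_pos[of n] by simp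
      have "c * (real n * \<rho> n) \<le> \<epsilon> / 16 * (real n * \<rho> n)" by (rule mult_right_mono[OF c2 X0])
      then have "3 \<le> \<epsilon> / 16 * (real n * \<rho> n)" using X by linarith
      then have "2 \<le> \<epsilon> * (real n * \<rho> n)" by linarith
      then have "2 / \<epsilon> \<le> real n * \<rho> n" using eps by (simp add: divide_le_eq mult.commute)
      then show ?case using n3 by auto
    qed
    have step: "\<bar>r n i \<omega> - m n i\<bar> \<le> \<epsilon>"
      if sp: "\<omega> \<in> space M" and nE: "\<omega> \<notin> E n" and i: "i < n" and nr: "2 / \<epsilon> \<le> real n * \<rho> n"
        and gd: "\<forall>n i j. i < n \<longrightarrow> j < n \<longrightarrow> i \<noteq> j \<longrightarrow> \<rho> n * \<Lambda> n i j \<omega> \<in> {0,1}" for n i \<omega>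
    proof -
      define J where "J = {..<n} - {i}"
      have rp: "0 < \<rho> n" by (rule rho_pos)
      have npos: "0 < real n" using i by simp
      have devS: "\<bar>S n i \<omega> - \<mu> n i\<bar> < t n" using sp nE i unfolding E_def by (simp add: not_le)
      have Lnn: "0 \<le> \<Lambda> n i j \<omega>" if "j \<in> J" for j
      proof -
        have "\<rho> n * \<Lambda> n i j \<omega> \<in> {0,1}" using gd that i unfolding J_def by auto
        then have "0 \<le> \<rho> n * \<Lambda> n i j \<omega>" by auto
        then show ?thesis using rp by (simp add: zero_le_mult_iff)
      qed
      have diag: "\<bar>\<Lambda> n i i \<omega>\<bar> \<le> 1 / \<rho> n" using Lam_diag[OF i sp] rp by auto
      have fin: "finite {..<n}" by simp
      have sr: "(\<Sum>j<n. \<bar>\<Lambda> n i j \<omega>\<bar>) = \<bar>\<Lambda> n i i \<omega>\<bar> + (\<Sum>j\<in>J. \<Lambda> n i j \<omega>)"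
        unfolding J_def using i Lnn[unfolded J_def] by (subst sum.remove[OF fin, of i]) auto
      have sm: "(\<Sum>j<n. \<bar>w n i j\<bar>) = w n i i + (\<Sum>j\<in>J. w n i j)"
        unfolding J_def using i w0[OF i] by (subst sum.remove[OF fin, of i]) auto
      define D where "D = (\<Sum>j\<in>J. \<Lambda> n i j \<omega>) - (\<Sum>j\<in>J. w n i j)"
      have SD: "S n i \<omega> - \<mu> n i = \<rho> n * D"
        unfolding S_def \<mu>_def D_def J_def by (simp add: sum_distrib_left right_diff_distrib)
      have "\<rho> n * \<bar>D\<bar> < \<rho> n * (\<epsilon> * real n / 2)"
        using devS unfolding SD t_def using rp by (simp add: abs_mult field_simps)
      then have Dl: "\<bar>D\<bar> < \<epsilon> * real n / 2" using rp by simp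
      have A: "\<bar>\<bar>\<Lambda> n i i \<omega>\<bar> - w n i i\<bar> \<le> 1 / \<rho> n" using diag w0[OF i i] wR[of n i i] by linarith
      have "r n i \<omega> - m n i = (\<bar>\<Lambda> n i i \<omega>\<bar> - w n i i + D) / real n"
        unfolding r_def m_def sr sm D_def by (simp add: diff_divide_distrib[symmetric])
      then have "\<bar>r n i \<omega> - m n i\<bar> = \<bar>\<bar>\<Lambda> n i i \<omega>\<bar> - w n i i + D\<bar> / real n" using npos by simp
      also have "\<dots> \<le> (1 / \<rho> n + \<epsilon> * real n / 2) / real n"
        using A Dl npos by (intro divide_right_mono) auto
      also have "\<dots> = 1 / (real n * \<rho> n) + \<epsilon> / 2" using npos rp by (simp add: field_simps)
      also have "1 / (real n * \<rho> n) \<le> \<epsilon> / 2"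
      proof -
        have "2 \<le> \<epsilon> * (real n * \<rho> n)" using nr eps by (simp add: divide_le_eq mult.commute)
        then show ?thesis using npos rp eps by (simp add: field_simps)
      qed
      finally show ?thesis by simp
    qed
    show ?thesis
      using G BC
    proof eventually_elim
      case (elim \<omega>)
      show ?case using elim(2) ev_det
      proof eventually_elim
        case (elim n)
        then show ?case using step[of \<omega> n] \<open>\<forall>n i j. _\<close> by auto
      qed
    qed
  qed

  have part1: "AE \<omega> in M. (\<lambda>n. Linf1 (In n (\<lambda>i j. \<Lambda> n i j \<omega>)) - Linf1 (In n (w n))) \<longlonglongrightarrow> 0"
  proof -
    have "AE \<omega> in M. \<forall>k::nat. eventually (\<lambda>n. \<forall>i<n. \<bar>r n i \<omega> - m n i\<bar> \<le> 1 / real (Suc k)) sequentially"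
      unfolding AE_all_countable by (intro allI dev) (auto simp: field_simps)
    then show ?thesis
    proof eventually_elim
      case (elim \<omega>)
      show ?case
      proof (rule LIMSEQ_I)
        fix e :: real assume e: "0 < e"
        obtain k0 :: nat where k0: "0 < k0" "inverse (real k0) < e" using ex_inverse_of_nat_less[OF e] by auto
        define k where "k = k0 - 1"
        have "Suc k = k0" using k0 by (simp add: k_def)
        then have kk: "1 / real (Suc k) < e" using k0 by (simp add: inverse_eq_divide)
        obtain N where N: "\<And>n. n \<ge> N \<Longrightarrow> \<forall>i<n. \<bar>r n i \<omega> - m n i\<bar> \<le> 1 / real (Suc k)"
          using elim[rule_format, of k] by (auto simp: eventually_sequentially)
        show "\<exists>no. \<forall>n\<ge>no. norm (Linf1 (In n (\<lambda>i j. \<Lambda> n i j \<omega>)) - Linf1 (In n (w n)) - 0) < e"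
        proof (intro exI allI impI)
          fix n assume n: "max N 1 \<le> n"
          then have npos: "0 < n" by simp
          have "\<bar>Linf1 (In n (\<lambda>i j. \<Lambda> n i j \<omega>)) - Linf1 (In n (w n))\<bar>
                = \<bar>Max ((\<lambda>i. r n i \<omega>) ` {..<n}) - Max ((\<lambda>i. m n i) ` {..<n})\<bar>"
            unfolding Linf1_In[OF npos] r_def m_def by simp
          also have "\<dots> \<le> 1 / real (Suc k)" by (rule Max_diff) (use npos N[of n] n in auto)
          finally show "norm (Linf1 (In n (\<lambda>i j. \<Lambda> n i j \<omega>)) - Linf1 (In n (w n)) - 0) < e"
            using kk by simp
        qed
      qed
    qed
  qed

  have SFK: "SF K < \<infinity>"
  proof -
    have "SF K = (SUP x\<in>{0..1}. \<integral>\<^sup>+ y\<in>{0..1}. ennreal (K x y) \<partial>lborel)"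
      unfolding SF_def
    proof (intro SUP_cong refl nn_integral_cong)
      fix x y :: real assume x: "x \<in> {0..1}"
      show "ennreal \<bar>K x y\<bar> * indicator {0..1} y = ennreal (K x y) * indicator {0..1} y"
        using K_nonneg[OF x, of y] by (auto simp: indicator_def)
    qed
    then show ?thesis using K_bdd by simp
  qed

  have part2: "(\<lambda>n. Linf1 (In n (w n))) \<longlonglongrightarrow> Linf1 K"
    if H: "\<forall>\<epsilon>>0. \<exists>N. \<forall>n\<ge>N. \<forall>x\<in>{0..1}.
              (\<integral>\<^sup>+ y\<in>{0..1}. ennreal \<bar>In n (Pn n K) x y - K x y\<bar> \<partial>lborel) < ennreal \<epsilon>"
  proof (rule LIMSEQ_I)
    fix e :: real assume e: "0 < e"
    define \<epsilon> where "\<epsilon> = e / 3"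
    have \<epsilon>: "0 < \<epsilon>" using e by (simp add: \<epsilon>_def)
    obtain N where HN: "\<And>n x. n \<ge> N \<Longrightarrow> x \<in> {0..1} \<Longrightarrow>
        (\<integral>\<^sup>+ y\<in>{0..1}. ennreal \<bar>In n (Pn n K) x y - K x y\<bar> \<partial>lborel) < ennreal \<epsilon>"
      using H \<epsilon> by blast
    define B where "B = (\<Sum>i<N. \<Sum>j<N. \<bar>Pn N K i j\<bar>)"
    have B0: "0 \<le> B" unfolding B_def by (intro sum_nonneg) auto
    have "eventually (\<lambda>n. \<rho> n < 1 / (B + 1)) sequentially"
      using order_tendstoD(2)[OF rho_lim, of "1/(B+1)"] B0 by simp
    then obtain N2 where N2: "\<And>n. n \<ge> N2 \<Longrightarrow> \<rho> n < 1 / (B + 1)" by (auto simp: eventually_sequentially)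
    show "\<exists>no. \<forall>n\<ge>no. norm (Linf1 (In n (w n)) - Linf1 K) < e"
    proof (intro exI allI impI)
      fix n assume n: "max N N2 \<le> n"
      have rp: "0 < \<rho> n" by (rule rho_pos)
      have RB: "B \<le> 1 / \<rho> n"
      proof -
        have "\<rho> n * (B + 1) < 1" using N2[of n] n B0 by (simp add: field_simps)
        then show ?thesis using rp by (simp add: field_simps)
      qed
      have mF: "(\<lambda>y. In n (w n) x y * indicator {0..1} y) \<in> borel_measurable borel" for x
        by measurable
      have d: "(\<integral>\<^sup>+ y\<in>{0..1}. ennreal \<bar>In n (w n) x y - K x y\<bar> \<partial>lborel) \<le> ennreal (2 * \<epsilon>)"
        if x: "x \<in> {0..1}" for x
      proof -
        have mK: "(\<lambda>y. K x y * indicator {0..1} y) \<in> borel_measurable borel" by (rule K_sec_meas[OF K_meas x])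
        have mI1: "(\<lambda>y. In n (Pn n K) x y * indicator {0..1} y) \<in> borel_measurable borel" by measurable
        have mI2: "(\<lambda>y. In N (Pn N K) x y * indicator {0..1} y) \<in> borel_measurable borel" by measurable
        have m1: "(\<lambda>y. ennreal \<bar>In n (Pn n K) x y - K x y\<bar> * indicator {0..1} y) \<in> borel_measurable lborel"
          by (rule meas_abs_diff[OF mI1 mK])
        have m2: "(\<lambda>y. ennreal \<bar>In N (Pn N K) x y - K x y\<bar> * indicator {0..1} y) \<in> borel_measurable lborel"
          by (rule meas_abs_diff[OF mI2 mK])
        have "(\<integral>\<^sup>+ y\<in>{0..1}. ennreal \<bar>In n (w n) x y - K x y\<bar> \<partial>lborel)
              \<le> (\<integral>\<^sup>+ y. ennreal \<bar>In n (Pn n K) x y - K x y\<bar> * indicator {0..1} y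
                     + ennreal \<bar>In N (Pn N K) x y - K x y\<bar> * indicator {0..1} y \<partial>lborel)"
        proof (rule nn_integral_mono)
          fix y
          have eqw: "In n (w n) x y = min (In n (Pn n K) x y) (1 / \<rho> n)"
            unfolding w_def by (rule In_min) (use rp in simp)
          have bB: "In N (Pn N K) x y \<le> 1 / \<rho> n"
            using In_bound[of N "Pn N K" x y] RB unfolding B_def by linarith
          have "\<bar>In n (w n) x y - K x y\<bar> \<le> \<bar>In n (Pn n K) x y - K x y\<bar> + \<bar>In N (Pn N K) x y - K x y\<bar>"
            using min_abs_bound[OF bB, of "In n (Pn n K) x y" "K x y"]
              abs_minus_commute[of "K x y" "In N (Pn N K) x y"] unfolding eqw by linarith
          then have "ennreal \<bar>In n (w n) x y - K x y\<bar> \<le> ennreal (\<bar>In n (Pn n K) x y - K x y\<bar> + \<bar>In N (Pn N K) x y - K x y\<bar>)"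
            by (rule ennreal_leI)
          also have "\<dots> = ennreal \<bar>In n (Pn n K) x y - K x y\<bar> + ennreal \<bar>In N (Pn N K) x y - K x y\<bar>"
            by (rule ennreal_plus) auto
          finally have "ennreal \<bar>In n (w n) x y - K x y\<bar> \<le> ennreal \<bar>In n (Pn n K) x y - K x y\<bar> + ennreal \<bar>In N (Pn N K) x y - K x y\<bar>" .
          then show "ennreal \<bar>In n (w n) x y - K x y\<bar> * indicator {0..1} y
              \<le> ennreal \<bar>In n (Pn n K) x y - K x y\<bar> * indicator {0..1} y + ennreal \<bar>In N (Pn N K) x y - K x y\<bar> * indicator {0..1} y"
            by (auto simp: indicator_def)
        qed
        also have "\<dots> = (\<integral>\<^sup>+ y\<in>{0..1}. ennreal \<bar>In n (Pn n K) x y - K x y\<bar> \<partial>lborel)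
                        + (\<integral>\<^sup>+ y\<in>{0..1}. ennreal \<bar>In N (Pn N K) x y - K x y\<bar> \<partial>lborel)"
          by (rule nn_integral_add[OF m1 m2])
        also have "\<dots> \<le> ennreal \<epsilon> + ennreal \<epsilon>"
          using HN[of n x] HN[of N x] n x by (intro add_mono) (auto intro: less_imp_le)
        also have "\<dots> = ennreal (2 * \<epsilon>)" using ennreal_plus[of \<epsilon> \<epsilon>] \<epsilon> by simp
        finally show ?thesis .
      qed
      have "\<bar>Linf1 (In n (w n)) - Linf1 K\<bar> \<le> 2 * \<epsilon>"
        by (rule Linf1_diff[OF mF K_sec_meas[OF K_meas] d _ SFK]) (use \<epsilon> in auto)
      then show "norm (Linf1 (In n (w n)) - Linf1 K) < e" using e unfolding \<epsilon>_def by simp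
    qed
  qed

  show ?thesis
  proof (intro conjI impI)
    show "AE \<omega> in M. (\<lambda>n. Linf1 (In n (\<lambda>i j. \<Lambda> n i j \<omega>)) - Linf1 (In n (w n))) \<longlonglongrightarrow> 0"
      by (rule part1)
    assume H: "\<forall>\<epsilon>>0. \<exists>N. \<forall>n\<ge>N. \<forall>x\<in>{0..1}.
              (\<integral>\<^sup>+ y\<in>{0..1}. ennreal \<bar>In n (Pn n K) x y - K x y\<bar> \<partial>lborel) < ennreal \<epsilon>"
    show "AE \<omega> in M. (\<lambda>n. Linf1 (In n (\<lambda>i j. \<Lambda> n i j \<omega>))) \<longlonglongrightarrow> Linf1 K"
      using part1
    proof eventually_elim
      case (elim \<omega>)
      have "(\<lambda>n. (Linf1 (In n (\<lambda>i j. \<Lambda> n i j \<omega>)) - Linf1 (In n (w n))) + Linf1 (In n (w n))) \<longlonglongrightarrow> 0 + Linf1 K"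
        by (rule tendsto_add[OF elim part2[OF H]])
      then show ?case by simp
    qed
  qed
qed


end
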